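(* Let $(\mathcal C,\mathcal D,O,\vec z,v)$ be a configuration for $(F,f)$, let $C$ be a PB constraint, and suppose there is a substitution $\omega$ such that $$\mathcal C\cup\mathcal D\cup\{f\le v-1\}\cup\{\neg C\}\ \vdash\ (\mathcal C\cup\mathcal D\cup\{C\})|_\omega\ \cup\ \{f|_\omega\le f\}\ \cup\ O(\vec z|_\omega,\vec z).$$ If $(\mathcal C,\mathcal D,O,\vec z,v)$ is weakly valid, then $(\mathcal C,\mathcal D\cup\{C\},O,\vec z,v)$ is weakly valid; if it is valid, then $(\mathcal C,\mathcal D\cup\{C\},O,\vec z,v)$ is valid.
   Context: Boolean variables take values in $\{0,1\}$; a literal is a variable $x$ or $\bar x=1-x$. A PB constraint is $C:\ \sum_i a_i\ell_i\ge A$ with integer $a_i,A$; its negation $\neg C$ is $\sum_i -a_i\ell_i\ge -A+1$. A total assignment $\alpha$ satisfies $C$ if $\sum_i a_i\alpha(\ell_i)\ge A$. A PB formula is a finite set of PB constraints. A substitution $\omega$ maps variables to literals or to $\{0,1\}$ (identity outside its domain, extended to literals by $\omega(\bar x)=\overline{\omega(x)}$); $C|_\omega$ replaces each $\ell_i$ by $\omega(\ell_i)$, $G|_\omega=\{D|_\omega: D\in G\}$, and for a total assignment $\alpha$, $\alpha\circ\omega$ is $x\mapsto\alpha(\omega(x))$. An objective is $f=\sum_i w_i\ell_i$ with integer $w_i$; $f|_\omega=\sum_i w_i\omega(\ell_i)$; $f\le k$ and $f|_\omega\le f$ are read as PB constraints, and for $k=\infty$ the constraints $f\le\infty$, $f\le\infty-1$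 are trivially true (empty). $G\vdash D$ means $D$ is derivable from $G$ in the cutting planes system (axioms from $G$, literal axioms $\ell\ge0$, positive integer linear combinations, division of a constraint with nonnegative coefficients by a positive integer rounding coefficients and degree up), where additionally $G\vdash D$ whenever $0\ge1$ is so derivable from $G\cup\{\neg D\}$; $G\vdash H$ for a set $H$ means $G\vdash D$ for all $D\in H$. This derivability is sound (every total assignment satisfying $G$ satisfies $D$). A preorder encoding is a PB formula $O(\vec u,\vec v)$ over two lists of $n$ placeholder variables with a list $\vec z=(z_1,\dots,z_n)$ of variables, such that $\alpha\preceq\beta$ iff $O(\vec z|_\alpha,\vec z|_\beta)$ is true is reflexive and transitive; here $O(\vec z|_\alpha,\vec z|_\beta)$ is $O$ with $u_i$ replaced by $\alpha(z_i)$ and $v_i$ by $\beta(z_i)$, so $O(\vec z|_\omega,\vec z)$ replaces $u_i$ by $\omega(z_i)$ and $v_i$ by $z_i$. $\alpha\preceq_f\beta$ iff $\alpha\preceq\beta$ and $f(\alpha)\le f(\beta)$. Fix input $F$ and objective $f$. A configuration $(\mathcal C,\mathcal D,O,\vec z,v)$ has PB sets $\mathcal C,\mathcal D$, a preorder encoding, and $v\in\mathbb Z\cup\{\infty\}$. It is weakly valid if (1) for every integer $v'<v$, satisfiability of $F\cup\{f\le v'\}$ implies satisfiability of $\mathcal C\cup\{f\le v'\}$; (2) every total $\rho$ satisfying $\mathcal C\cup\{f\le v-1\}$ admits a total $\rho'\preceq_f\rho$ satisfying $\mathcal C\cup\mathcal D\cup\{f\le v-1\}$. It is valid if also (3) $v<\infty$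 implies $F\cup\{f\le v\}$ satisfiable; (4) for every integer $v'<v$, satisfiability of $\mathcal C\cup\{f\le v'\}$ implies satisfiability of $F\cup\{f\le v'\}$. *)

theory Defs
  imports Main
begin

datatype 'v lit = Pos 'v | Neg 'v

text \<open>Image of a literal under a substitution: a literal or a constant in {0,1}.\<close>
datatype 'v slit = L "'v lit" | K bool

datatype 'v pbc = PBC "(int \<times> 'v lit) list" int

fun var :: "'v lit \<Rightarrow> 'v" where
  "var (Pos x) = x" | "var (Neg x) = x"

fun neg_lit :: "'v lit \<Rightarrow> 'v lit" where
  "neg_lit (Pos x) = Neg x" | "neg_lit (Neg x) = Pos x"

fun lit_val :: "('v \<Rightarrow> bool) \<Rightarrow> 'v lit \<Rightarrow> int" where
  "lit_val \<alpha> (Pos x) = of_bool (\<alpha> x)"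
| "lit_val \<alpha> (Neg x) = 1 - of_bool (\<alpha> x)"

definition lhs :: "('v \<Rightarrow> bool) \<Rightarrow> (int \<times> 'v lit) list \<Rightarrow> int" where
  "lhs \<alpha> ts = (\<Sum>(a, l)\<leftarrow>ts. a * lit_val \<alpha> l)"

fun sat :: "('v \<Rightarrow> bool) \<Rightarrow> 'v pbc \<Rightarrow> bool" where
  "sat \<alpha> (PBC ts A) = (lhs \<alpha> ts \<ge> A)"

definition sat_set :: "('v \<Rightarrow> bool) \<Rightarrow> 'v pbc set \<Rightarrow> bool" where
  "sat_set \<alpha> G = (\<forall>C\<in>G. sat \<alpha> C)"

definition satisfiable :: "'v pbc set \<Rightarrow> bool" where
  "satisfiable G = (\<exists>\<alpha>. sat_set \<alpha> G)"

fun neg :: "'v pbc \<Rightarrow> 'v pbc" where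
  "neg (PBC ts A) = PBC (map (\<lambda>(a, l). (-a, l)) ts) (-A + 1)"

fun vars :: "'v pbc \<Rightarrow> 'v set" where
  "vars (PBC ts A) = {var l | a l. (a, l) \<in> set ts}"

text \<open>A substitution is a total map from variables to literals/constants
  (identity outside its domain is represented by mapping x to L (Pos x)).\<close>

fun neg_slit :: "'v slit \<Rightarrow> 'v slit" where
  "neg_slit (L l) = L (neg_lit l)" | "neg_slit (K b) = K (\<not> b)"

fun subst_lit :: "('a \<Rightarrow> 'b slit) \<Rightarrow> 'a lit \<Rightarrow> 'b slit" where
  "subst_lit \<omega> (Pos x) = \<omega> x"
| "subst_lit \<omega> (Neg x) = neg_slit (\<omega> x)"

definition subst_lits :: "('a \<Rightarrow> 'b slit) \<Rightarrow> (int \<times> 'a lit) list \<Rightarrow> (int \<times> 'b lit) list" where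
  "subst_lits \<omega> ts = concat (map (\<lambda>(a, l). case subst_lit \<omega> l of L l' \<Rightarrow> [(a, l')] | K _ \<Rightarrow> []) ts)"

definition subst_const :: "('a \<Rightarrow> 'b slit) \<Rightarrow> (int \<times> 'a lit) list \<Rightarrow> int" where
  "subst_const \<omega> ts = (\<Sum>(a, l)\<leftarrow>ts. case subst_lit \<omega> l of L _ \<Rightarrow> 0 | K b \<Rightarrow> a * of_bool b)"

fun subst_pbc :: "('a \<Rightarrow> 'b slit) \<Rightarrow> 'a pbc \<Rightarrow> 'b pbc" where
  "subst_pbc \<omega> (PBC ts A) = PBC (subst_lits \<omega> ts) (A - subst_const \<omega> ts)"

definition subst_set :: "('a \<Rightarrow> 'b slit) \<Rightarrow> 'a pbc set \<Rightarrow> 'b pbc set" where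
  "subst_set \<omega> G = subst_pbc \<omega> ` G"

type_synonym 'v obj = "(int \<times> 'v lit) list"

definition obj_val :: "('v \<Rightarrow> bool) \<Rightarrow> 'v obj \<Rightarrow> int" where
  "obj_val \<alpha> f = lhs \<alpha> f"

definition obj_le :: "'v obj \<Rightarrow> int \<Rightarrow> 'v pbc" where
  "obj_le f k = PBC (map (\<lambda>(w, l). (-w, l)) f) (-k)"

text \<open>Extended integers Z \<union> {\<infinity>}: None stands for \<infinity>.\<close>
type_synonym eint = "int option"

definition eint_dec :: "eint \<Rightarrow> eint" where
  "eint_dec v = map_option (\<lambda>k. k - 1) v"

definition eint_less :: "int \<Rightarrow> eint \<Rightarrow> bool" where
  "eint_less k v = (case v of None \<Rightarrow> True | Some m \<Rightarrow> k < m)"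

definition obj_le_ext :: "'v obj \<Rightarrow> eint \<Rightarrow> 'v pbc set" where
  "obj_le_ext f v = (case v of None \<Rightarrow> {} | Some k \<Rightarrow> {obj_le f k})"

definition obj_subst_le :: "('v \<Rightarrow> 'v slit) \<Rightarrow> 'v obj \<Rightarrow> 'v pbc" where
  "obj_subst_le \<omega> f = PBC (f @ map (\<lambda>(w, l). (-w, l)) (subst_lits \<omega> f)) (subst_const \<omega> f)"

text \<open>Placeholder variables: (False, i) is u_i and (True, i) is v_i.\<close>
type_synonym penc = "(bool \<times> nat) pbc set"

definition enc_holds :: "penc \<Rightarrow> 'v list \<Rightarrow> ('v \<Rightarrow> bool) \<Rightarrow> ('v \<Rightarrow> bool) \<Rightarrow> bool" where
  "enc_holds Oenc z \<alpha> \<beta> = sat_set (\<lambda>(b, i). if b then \<beta> (z ! i) else \<alpha> (z ! i)) Oenc"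

definition is_preorder_encoding :: "penc \<Rightarrow> 'v list \<Rightarrow> bool" where
  "is_preorder_encoding Oenc z \<longleftrightarrow>
     finite Oenc \<and> (\<forall>C\<in>Oenc. vars C \<subseteq> {(b, i). i < length z}) \<and>
     (\<forall>\<alpha>. enc_holds Oenc z \<alpha> \<alpha>) \<and>
     (\<forall>\<alpha> \<beta> \<gamma>. enc_holds Oenc z \<alpha> \<beta> \<longrightarrow> enc_holds Oenc z \<beta> \<gamma> \<longrightarrow> enc_holds Oenc z \<alpha> \<gamma>)"

definition preceq_f :: "penc \<Rightarrow> 'v list \<Rightarrow> 'v obj \<Rightarrow> ('v \<Rightarrow> bool) \<Rightarrow> ('v \<Rightarrow> bool) \<Rightarrow> bool" where
  "preceq_f Oenc z f \<alpha> \<beta> \<longleftrightarrow> enc_holds Oenc z \<alpha> \<beta> \<and> obj_val \<alpha> f \<le> obj_val \<beta> f"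

definition enc_subst :: "penc \<Rightarrow> 'v list \<Rightarrow> ('v \<Rightarrow> 'v slit) \<Rightarrow> 'v pbc set" where
  "enc_subst Oenc z \<omega> = subst_set (\<lambda>(b, i). if b then L (Pos (z ! i)) else \<omega> (z ! i)) Oenc"

text \<open>Normal form over variables: coefficient map c and degree d, meaning sum_x c x * x >= d.\<close>
fun norm :: "'v pbc \<Rightarrow> ('v \<Rightarrow> int) \<times> int" where
  "norm (PBC ts A) =
     ((\<lambda>x. \<Sum>(a, l)\<leftarrow>ts. (case l of Pos y \<Rightarrow> if y = x then a else 0
                                   | Neg y \<Rightarrow> if y = x then -a else 0)),
      A - (\<Sum>(a, l)\<leftarrow>ts. (case l of Neg _ \<Rightarrow> a | Pos _ \<Rightarrow> 0)))"

definition ceil_div :: "int \<Rightarrow> int \<Rightarrow> int" where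
  "ceil_div a k = - ((- a) div k)"

text \<open>Division: write the constraint with nonnegative coefficients over literals
  (x for c x > 0, negated x for c x < 0), divide coefficients and degree by k rounding up,
  and translate back to the variable normal form.\<close>
inductive cp :: "'v pbc set \<Rightarrow> ('v \<Rightarrow> int) \<times> int \<Rightarrow> bool" for G where
  cp_ax: "C \<in> G \<Longrightarrow> cp G (norm C)"
| cp_pos: "cp G ((\<lambda>y. if y = x then 1 else 0), 0)"
| cp_negl: "cp G ((\<lambda>y. if y = x then -1 else 0), -1)"
| cp_add: "cp G (c, d) \<Longrightarrow> cp G (c', d') \<Longrightarrow> cp G ((\<lambda>x. c x + c' x), d + d')"
| cp_mult: "cp G (c, d) \<Longrightarrow> (k::int) > 0 \<Longrightarrow> cp G ((\<lambda>x. k * c x), k * d)"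
| cp_div: "cp G (c, d) \<Longrightarrow> (k::int) > 0 \<Longrightarrow>
     cp G ((\<lambda>x. sgn (c x) * ceil_div \<bar>c x\<bar> k),
           ceil_div (d + (\<Sum>x\<in>{x. c x < 0}. - c x)) k - (\<Sum>x\<in>{x. c x < 0}. ceil_div (- c x) k))"

definition derives :: "'v pbc set \<Rightarrow> 'v pbc \<Rightarrow> bool" where
  "derives G D \<longleftrightarrow> cp G (norm D) \<or> cp (G \<union> {neg D}) ((\<lambda>_. 0), 1)"

definition derives_set :: "'v pbc set \<Rightarrow> 'v pbc set \<Rightarrow> bool" where
  "derives_set G H \<longleftrightarrow> (\<forall>D\<in>H. derives G D)"

definition weakly_valid ::
  "'v pbc set \<Rightarrow> 'v obj \<Rightarrow> 'v pbc set \<Rightarrow> 'v pbc set \<Rightarrow> penc \<Rightarrow> 'v list \<Rightarrow> eint \<Rightarrow> bool" where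
  "weakly_valid F f \<C> \<D> Oenc z v \<longleftrightarrow>
     (\<forall>v'. eint_less v' v \<longrightarrow> satisfiable (F \<union> {obj_le f v'}) \<longrightarrow> satisfiable (\<C> \<union> {obj_le f v'})) \<and>
     (\<forall>\<rho>. sat_set \<rho> (\<C> \<union> obj_le_ext f (eint_dec v)) \<longrightarrow>
        (\<exists>\<rho>'. preceq_f Oenc z f \<rho>' \<rho> \<and> sat_set \<rho>' (\<C> \<union> \<D> \<union> obj_le_ext f (eint_dec v))))"

definition valid ::
  "'v pbc set \<Rightarrow> 'v obj \<Rightarrow> 'v pbc set \<Rightarrow> 'v pbc set \<Rightarrow> penc \<Rightarrow> 'v list \<Rightarrow> eint \<Rightarrow> bool" where
  "valid F f \<C> \<D> Oenc z v \<longleftrightarrow>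
     weakly_valid F f \<C> \<D> Oenc z v \<and>
     (v \<noteq> None \<longrightarrow> satisfiable (F \<union> obj_le_ext f v)) \<and>
     (\<forall>v'. eint_less v' v \<longrightarrow> satisfiable (\<C> \<union> {obj_le f v'}) \<longrightarrow> satisfiable (F \<union> {obj_le f v'}))"

end

theory Submission
  imports Defs
begin

lemma lit_val_01: "lit_val \<alpha> l = 0 \<or> lit_val \<alpha> l = 1"
  by (cases l) auto

lemma lhs_Nil[simp]: "lhs \<alpha> [] = 0" by (simp add: lhs_def)
lemma lhs_Cons[simp]: "lhs \<alpha> ((a,l)#ts) = a * lit_val \<alpha> l + lhs \<alpha> ts" by (simp add: lhs_def)
lemma lhs_append[simp]: "lhs \<alpha> (xs @ ys) = lhs \<alpha> xs + lhs \<alpha> ys" by (simp add: lhs_def)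

lemma lhs_map_neg: "lhs \<alpha> (map (\<lambda>(a,l). (-a,l)) ts) = - lhs \<alpha> ts"
  by (induction ts) auto

lemma sat_obj_le: "sat \<alpha> (obj_le f k) \<longleftrightarrow> obj_val \<alpha> f \<le> k"
  unfolding obj_le_def obj_val_def by (simp add: lhs_map_neg)

lemma sat_neg: "sat \<alpha> (neg D) \<longleftrightarrow> \<not> sat \<alpha> D"
  by (cases D) (auto simp: lhs_map_neg)

definition asg_comp :: "('b \<Rightarrow> bool) \<Rightarrow> ('a \<Rightarrow> 'b slit) \<Rightarrow> 'a \<Rightarrow> bool" where
  "asg_comp \<alpha> \<omega> x = (case \<omega> x of L l \<Rightarrow> lit_val \<alpha> l = 1 | K b \<Rightarrow> b)"

lemma lit_val_neg_lit: "lit_val \<alpha> (neg_lit l) = 1 - lit_val \<alpha> l"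
  by (cases l) auto

lemma subst_L: assumes that: "subst_lit \<omega> l = L l'" shows "lit_val \<alpha> l' = lit_val (asg_comp \<alpha> \<omega>) l"
proof (cases l)
  case (Pos x)
  then show ?thesis using that lit_val_01[of \<alpha> l'] by (auto simp: asg_comp_def)
next
  case (Neg x)
  then show ?thesis using that
    by (cases "\<omega> x") (use lit_val_01 in \<open>force simp: asg_comp_def lit_val_neg_lit\<close>)+
qed

lemma subst_K: assumes that: "subst_lit \<omega> l = K b" shows "of_bool b = lit_val (asg_comp \<alpha> \<omega>) l"
proof (cases l)
  case (Pos x)
  then show ?thesis using that by (auto simp: asg_comp_def)
next
  case (Neg x)
  then show ?thesis using that
    by (cases "\<omega> x") (auto simp: asg_comp_def)
qed

lemma lhs_subst: "lhs \<alpha> (subst_lits \<omega> ts) + subst_const \<omega> ts = lhs (asg_comp \<alpha> \<omega>) ts"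
proof (induction ts)
  case Nil
  then show ?case by (simp add: subst_lits_def subst_const_def)
next
  case (Cons t ts)
  obtain a l where t: "t = (a,l)" by fastforce
  have sl: "subst_lits \<omega> ((a,l)#ts) = (case subst_lit \<omega> l of L l' \<Rightarrow> [(a, l')] | K _ \<Rightarrow> []) @ subst_lits \<omega> ts"
    by (simp add: subst_lits_def t)
  have sc: "subst_const \<omega> ((a,l)#ts) = (case subst_lit \<omega> l of L _ \<Rightarrow> 0 | K b \<Rightarrow> a * of_bool b) + subst_const \<omega> ts"
    by (simp add: subst_const_def t)
  show ?case
  proof (cases "subst_lit \<omega> l")
    case (L l')
    then show ?thesis using Cons subst_L[OF L, of \<alpha>] by (simp add: sl sc t)
  next
    case (K b)
    then show ?thesis using Cons subst_K[OF K, of \<alpha>] by (simp add: sl sc t)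
  qed
qed

lemma sat_subst: "sat \<alpha> (subst_pbc \<omega> C) \<longleftrightarrow> sat (asg_comp \<alpha> \<omega>) C"
proof (cases C)
  case (PBC ts A)
  show ?thesis using lhs_subst[of \<alpha> \<omega> ts] by (simp add: PBC, linarith)
qed

lemma sat_set_subst: "sat_set \<alpha> (subst_set \<omega> G) \<longleftrightarrow> sat_set (asg_comp \<alpha> \<omega>) G"
  by (auto simp: sat_set_def subst_set_def sat_subst)

lemma sat_obj_subst: "sat \<alpha> (obj_subst_le \<omega> f) \<longleftrightarrow> obj_val (asg_comp \<alpha> \<omega>) f \<le> obj_val \<alpha> f"
  using lhs_subst[of \<alpha> \<omega> f]
  by (auto simp: obj_subst_le_def obj_val_def lhs_map_neg)

lemma sat_enc_subst: "sat_set \<alpha> (enc_subst Oenc z \<omega>) \<longleftrightarrow> enc_holds Oenc z (asg_comp \<alpha> \<omega>) \<alpha>"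
proof -
  have "asg_comp \<alpha> (\<lambda>(b, i). if b then L (Pos (z ! i)) else \<omega> (z ! i))
      = (\<lambda>(b, i). if b then \<alpha> (z ! i) else asg_comp \<alpha> \<omega> (z ! i))"
    by (auto simp: asg_comp_def fun_eq_iff)
  then show ?thesis
    by (simp add: enc_subst_def sat_set_subst enc_holds_def)
qed

definition ev :: "('v \<Rightarrow> bool) \<Rightarrow> ('v \<Rightarrow> int) \<Rightarrow> int" where
  "ev \<alpha> c = (\<Sum>x | c x \<noteq> 0. c x * of_bool (\<alpha> x))"

lemma ev_superset:
  assumes "finite S" "{x. c x \<noteq> 0} \<subseteq> S"
  shows "ev \<alpha> c = (\<Sum>x\<in>S. c x * of_bool (\<alpha> x))"
  unfolding ev_def by (rule sum.mono_neutral_left) (use assms in auto)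

definition ncoef :: "(int \<times> 'v lit) list \<Rightarrow> 'v \<Rightarrow> int" where
  "ncoef ts x = (\<Sum>(a, l)\<leftarrow>ts. (case l of Pos y \<Rightarrow> if y = x then a else 0
                                   | Neg y \<Rightarrow> if y = x then -a else 0))"

definition nsum :: "(int \<times> 'v lit) list \<Rightarrow> int" where
  "nsum ts = (\<Sum>(a, l)\<leftarrow>ts. (case l of Neg _ \<Rightarrow> a | Pos _ \<Rightarrow> 0))"

lemma norm_eq: "norm (PBC ts A) = (ncoef ts, A - nsum ts)"
  by (simp add: ncoef_def nsum_def fun_eq_iff)

lemma ncoef_zero: "x \<notin> var ` snd ` set ts \<Longrightarrow> ncoef ts x = 0"
proof (induction ts)
  case Nil then show ?case by (simp add: ncoef_def)
next
  case (Cons t ts)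
  obtain a l where t: "t = (a,l)" by fastforce
  show ?case using Cons by (cases l) (auto simp: ncoef_def t)
qed

lemma ncoef_sum:
  assumes "finite S" "var ` snd ` set ts \<subseteq> S"
  shows "(\<Sum>x\<in>S. ncoef ts x * of_bool (\<alpha> x)) = lhs \<alpha> ts - nsum ts"
  using assms(2)
proof (induction ts)
  case Nil then show ?case by (simp add: ncoef_def nsum_def)
next
  case (Cons t ts)
  obtain a l where t: "t = (a,l)" by fastforce
  have nc: "ncoef (t#ts) x = (case l of Pos y \<Rightarrow> if y = x then a else 0
                                   | Neg y \<Rightarrow> if y = x then -a else 0) + ncoef ts x" for x
    by (simp add: ncoef_def t)
  have ns: "nsum ((a,l)#ts) = (case l of Neg _ \<Rightarrow> a | Pos _ \<Rightarrow> 0) + nsum ts"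
    by (simp add: nsum_def t)
  have IH: "(\<Sum>x\<in>S. ncoef ts x * of_bool (\<alpha> x)) = lhs \<alpha> ts - nsum ts"
    using Cons by auto
  show ?case
  proof (cases l)
    case (Pos y)
    have yS: "y \<in> S" using Cons.prems t Pos by auto
    have "(\<Sum>x\<in>S. ncoef (t#ts) x * of_bool (\<alpha> x))
        = (\<Sum>x\<in>S. (if y = x then a else 0) * of_bool (\<alpha> x)) + (\<Sum>x\<in>S. ncoef ts x * of_bool (\<alpha> x))"
      by (simp add: nc Pos distrib_right sum.distrib[symmetric] cong: sum.cong)
    also have "\<dots> = a * of_bool (\<alpha> y) + (lhs \<alpha> ts - nsum ts)"
      using yS assms(1) IH by (simp add: if_distrib[of "\<lambda>u. u * _"] cong: if_cong)
    finally show ?thesis using ns by (simp add: t Pos)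
  next
    case (Neg y)
    have yS: "y \<in> S" using Cons.prems t Neg by auto
    have "(\<Sum>x\<in>S. ncoef (t#ts) x * of_bool (\<alpha> x))
        = (\<Sum>x\<in>S. (if y = x then - a else 0) * of_bool (\<alpha> x)) + (\<Sum>x\<in>S. ncoef ts x * of_bool (\<alpha> x))"
      by (simp add: nc Neg distrib_right sum.distrib[symmetric] cong: sum.cong)
    also have "\<dots> = - a * of_bool (\<alpha> y) + (lhs \<alpha> ts - nsum ts)"
      using yS assms(1) IH by (simp add: if_distrib[of "\<lambda>u. u * _"] cong: if_cong)
    finally show ?thesis using ns by (simp add: t Neg algebra_simps)
  qed
qed

lemma norm_sem:
  "finite {x. fst (norm D) x \<noteq> 0} \<and> (ev \<alpha> (fst (norm D)) \<ge> snd (norm D) \<longleftrightarrow> sat \<alpha> D)"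
proof (cases D)
  case (PBC ts A)
  let ?S = "var ` snd ` set ts"
  have sub: "{x. ncoef ts x \<noteq> 0} \<subseteq> ?S"
  proof
    fix x assume "x \<in> {x. ncoef ts x \<noteq> 0}"
    then show "x \<in> ?S" using ncoef_zero[of x ts] by blast
  qed
  have fin: "finite ?S" by simp
  have "ev \<alpha> (ncoef ts) = lhs \<alpha> ts - nsum ts"
    using ev_superset[OF fin sub, of \<alpha>] ncoef_sum[OF fin order_refl, of \<alpha>] by simp
  moreover have "finite {x. ncoef ts x \<noteq> 0}" by (rule finite_subset[OF sub fin])
  ultimately show ?thesis unfolding PBC norm_eq fst_conv snd_conv sat.simps by linarith
qed

definition ceil_div' :: "int \<Rightarrow> int \<Rightarrow> int" where "ceil_div' a k = ceil_div a k"

lemma ceil_div_ge: "k > 0 \<Longrightarrow> k * ceil_div a k \<ge> a"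
proof -
  assume k: "k > 0"
  have "k * ((-a) div k) \<le> -a"
  proof -
    have "k * ((-a) div k) + (-a) mod k = -a" by (rule mult_div_mod_eq)
    moreover have "(-a) mod k \<ge> 0" using k by simp
    ultimately show ?thesis by linarith
  qed
  then show ?thesis by (simp add: ceil_div_def)
qed

lemma ceil_div_le: "k > 0 \<Longrightarrow> k * X \<ge> D \<Longrightarrow> X \<ge> ceil_div D k"
proof -
  assume k: "k > 0" and h: "k * X \<ge> D"
  have "(k * (-X)) div k \<le> (-D) div k" using k h by (intro zdiv_mono1) auto
  moreover have "(k * (-X)) div k = -X" using k by (rule nonzero_mult_div_cancel_left[OF less_imp_neq[symmetric]])
  ultimately have "-X \<le> (-D) div k" by linarith
  then show ?thesis by (simp add: ceil_div_def)
qed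

lemma cp_sound:
  "cp G p \<Longrightarrow> finite {x. fst p x \<noteq> 0} \<and> (sat_set \<alpha> G \<longrightarrow> ev \<alpha> (fst p) \<ge> snd p)"
proof (induction p rule: cp.induct)
  case (cp_ax C)
  then show ?case using norm_sem[of C \<alpha>] by (auto simp: sat_set_def)
next
  case (cp_pos x)
  have "{y. (if y = x then 1 else 0::int) \<noteq> 0} \<subseteq> {x}" by auto
  from ev_superset[OF _ this] show ?case by auto
next
  case (cp_negl x)
  have "{y. (if y = x then -1 else 0::int) \<noteq> 0} \<subseteq> {x}" by auto
  from ev_superset[OF _ this] show ?case by auto
next
  case (cp_add c d c' d')
  let ?S = "{x. c x \<noteq> 0} \<union> {x. c' x \<noteq> 0}"
  have fin: "finite ?S" using cp_add by auto
  have s: "{x. c x + c' x \<noteq> 0} \<subseteq> ?S" by auto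
  have "ev \<alpha> (\<lambda>x. c x + c' x) = ev \<alpha> c + ev \<alpha> c'"
    using ev_superset[OF fin s] ev_superset[OF fin, of c] ev_superset[OF fin, of c']
    by (simp add: sum.distrib distrib_right)
  then show ?case using cp_add finite_subset[OF s fin] by auto
next
  case (cp_mult c d k)
  have s: "{x. k * c x \<noteq> 0} = {x. c x \<noteq> 0}" using cp_mult by auto
  have "ev \<alpha> (\<lambda>x. k * c x) = k * ev \<alpha> c"
    unfolding ev_def s by (simp add: sum_distrib_left mult.assoc)
  then show ?case using cp_mult s by (auto intro: mult_left_mono)
next
  case (cp_div c d k)
  let ?S = "{x. c x \<noteq> 0}"
  let ?N = "{x. c x < 0}"
  define a where "a x = (of_bool (\<alpha> x) :: int)" for x
  define b where "b x = (if c x > 0 then a x else 1 - a x)" for x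
  define q where "q x = ceil_div \<bar>c x\<bar> k" for x
  define c' where "c' = (\<lambda>x. sgn (c x) * ceil_div \<bar>c x\<bar> k)"
  have fin: "finite ?S" using cp_div by auto
  have NS: "{x\<in>?S. c x < 0} = ?N" by auto
  have b0: "b x \<ge> 0" for x by (auto simp: b_def a_def)
  have s': "{x. c' x \<noteq> 0} \<subseteq> ?S" by (auto simp: c'_def)
  have e1: "c x * a x = \<bar>c x\<bar> * b x - (if c x < 0 then \<bar>c x\<bar> else 0)" if "x \<in> ?S" for x
    using that by (auto simp: b_def algebra_simps)
  have e2: "c' x * a x = q x * b x - (if c x < 0 then q x else 0)" if "x \<in> ?S" for x
    using that by (auto simp: b_def c'_def q_def algebra_simps)
  have "ev \<alpha> c = (\<Sum>x\<in>?S. c x * a x)" using ev_superset[OF fin, of c] by (simp add: a_def)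
  also have "\<dots> = (\<Sum>x\<in>?S. \<bar>c x\<bar> * b x) - (\<Sum>x\<in>?S. (if c x < 0 then \<bar>c x\<bar> else 0))"
    using e1 by (simp add: sum_subtractf)
  also have "(\<Sum>x\<in>?S. (if c x < 0 then \<bar>c x\<bar> else 0)) = (\<Sum>x\<in>{x\<in>?S. c x < 0}. \<bar>c x\<bar>)"
    by (rule sum.inter_filter[OF fin, symmetric])
  also have "\<dots> = (\<Sum>x\<in>?N. - c x)" unfolding NS by (rule sum.cong) auto
  finally have ec: "ev \<alpha> c = (\<Sum>x\<in>?S. \<bar>c x\<bar> * b x) - (\<Sum>x\<in>?N. - c x)" .
  have "ev \<alpha> c' = (\<Sum>x\<in>?S. c' x * a x)" using ev_superset[OF fin s'] by (simp add: a_def)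
  also have "\<dots> = (\<Sum>x\<in>?S. q x * b x) - (\<Sum>x\<in>?S. (if c x < 0 then q x else 0))"
    using e2 by (simp add: sum_subtractf)
  also have "(\<Sum>x\<in>?S. (if c x < 0 then q x else 0)) = (\<Sum>x\<in>{x\<in>?S. c x < 0}. q x)"
    by (rule sum.inter_filter[OF fin, symmetric])
  also have "\<dots> = (\<Sum>x\<in>?N. q x)" unfolding NS ..
  also have "(\<Sum>x\<in>?N. q x) = (\<Sum>x\<in>?N. ceil_div (- c x) k)"
    by (rule sum.cong) (auto simp: q_def)
  finally have ec': "ev \<alpha> c' = (\<Sum>x\<in>?S. q x * b x) - (\<Sum>x\<in>?N. ceil_div (- c x) k)" .
  have "k * (\<Sum>x\<in>?S. q x * b x) = (\<Sum>x\<in>?S. (k * q x) * b x)"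
    by (simp add: sum_distrib_left mult.assoc)
  also have "\<dots> \<ge> (\<Sum>x\<in>?S. \<bar>c x\<bar> * b x)"
    by (rule sum_mono) (use cp_div.hyps ceil_div_ge b0 in \<open>auto intro: mult_right_mono simp: q_def\<close>)
  finally have kk: "k * (\<Sum>x\<in>?S. q x * b x) \<ge> (\<Sum>x\<in>?S. \<bar>c x\<bar> * b x)" .
  have fc': "finite {x. c' x \<noteq> 0}" using finite_subset[OF s' fin] .
  have res: "sat_set \<alpha> G \<longrightarrow> ev \<alpha> c' \<ge> ceil_div (d + (\<Sum>x\<in>?N. - c x)) k - (\<Sum>x\<in>?N. ceil_div (- c x) k)"
  proof
    assume "sat_set \<alpha> G"
    then have "ev \<alpha> c \<ge> d" using cp_div.IH by auto
    then have "k * (\<Sum>x\<in>?S. q x * b x) \<ge> d + (\<Sum>x\<in>?N. - c x)" using kk ec by linarith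
    then have "(\<Sum>x\<in>?S. q x * b x) \<ge> ceil_div (d + (\<Sum>x\<in>?N. - c x)) k"
      using ceil_div_le cp_div.hyps by blast
    then show "ev \<alpha> c' \<ge> ceil_div (d + (\<Sum>x\<in>?N. - c x)) k - (\<Sum>x\<in>?N. ceil_div (- c x) k)"
      using ec' by simp
  qed
  show ?case unfolding c'_def[symmetric] using fc' res by simp
qed

lemma derives_sound: "derives G D \<Longrightarrow> sat_set \<alpha> G \<Longrightarrow> sat \<alpha> D"
proof -
  assume d: "derives G D" and s: "sat_set \<alpha> G"
  show "sat \<alpha> D"
  proof (cases "cp G (norm D)")
    case True
    then show ?thesis using cp_sound[OF True, of \<alpha>] s norm_sem[of D \<alpha>] by auto
  next
    case False
    then have c: "cp (G \<union> {neg D}) ((\<lambda>_. 0), 1)" using d by (simp add: derives_def)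
    show ?thesis
    proof (rule ccontr)
      assume "\<not> sat \<alpha> D"
      then have "sat_set \<alpha> (G \<union> {neg D})" using s by (simp add: sat_set_def sat_neg)
      then show False using cp_sound[OF c, of \<alpha>] by (simp add: ev_def)
    qed
  qed
qed

lemma derives_set_sound: "derives_set G H \<Longrightarrow> sat_set \<alpha> G \<Longrightarrow> sat_set \<alpha> H"
  by (auto simp: derives_set_def sat_set_def intro: derives_sound[unfolded sat_set_def])

theorem mainTheorem4:
  fixes F \<C> \<D> :: "'v pbc set" and f :: "'v obj" and Oenc :: penc and z :: "'v list"
    and v :: eint and C :: "'v pbc" and \<omega> :: "'v \<Rightarrow> 'v slit"
  assumes enc: "is_preorder_encoding Oenc z"
    and der: "derives_set (\<C> \<union> \<D> \<union> obj_le_ext f (eint_dec v) \<union> {neg C})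
                (subst_set \<omega> (\<C> \<union> \<D> \<union> {C}) \<union> {obj_subst_le \<omega> f} \<union> enc_subst Oenc z \<omega>)"
  shows "(weakly_valid F f \<C> \<D> Oenc z v \<longrightarrow> weakly_valid F f \<C> (\<D> \<union> {C}) Oenc z v) \<and>
         (valid F f \<C> \<D> Oenc z v \<longrightarrow> valid F f \<C> (\<D> \<union> {C}) Oenc z v)"
proof -
  have W: "weakly_valid F f \<C> (\<D> \<union> {C}) Oenc z v" if wv: "weakly_valid F f \<C> \<D> Oenc z v"
  proof -
    let ?E = "obj_le_ext f (eint_dec v)"
    have step: "\<exists>\<rho>'. preceq_f Oenc z f \<rho>' \<rho> \<and> sat_set \<rho>' (\<C> \<union> (\<D> \<union> {C}) \<union> ?E)"
      if r: "sat_set \<rho> (\<C> \<union> ?E)" for \<rho>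
    proof -
      obtain \<rho>1 where p1: "preceq_f Oenc z f \<rho>1 \<rho>" and s1: "sat_set \<rho>1 (\<C> \<union> \<D> \<union> ?E)"
        using wv r unfolding weakly_valid_def by blast
      show ?thesis
      proof (cases "sat \<rho>1 C")
        case True
        then show ?thesis using p1 s1 by (auto simp: sat_set_def)
      next
        case False
        then have "sat_set \<rho>1 (\<C> \<union> \<D> \<union> ?E \<union> {neg C})" using s1 by (simp add: sat_set_def sat_neg)
        from derives_set_sound[OF der this]
        have h: "sat_set \<rho>1 (subst_set \<omega> (\<C> \<union> \<D> \<union> {C}) \<union> {obj_subst_le \<omega> f} \<union> enc_subst Oenc z \<omega>)" .
        have a1: "sat_set (asg_comp \<rho>1 \<omega>) (\<C> \<union> \<D> \<union> {C})"
          using h unfolding sat_set_subst[symmetric] by (simp add: sat_set_def)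
        have a2: "obj_val (asg_comp \<rho>1 \<omega>) f \<le> obj_val \<rho>1 f"
          using h unfolding sat_obj_subst[symmetric] by (simp add: sat_set_def)
        have "sat_set \<rho>1 (enc_subst Oenc z \<omega>)" using h by (simp add: sat_set_def)
        then have a3: "enc_holds Oenc z (asg_comp \<rho>1 \<omega>) \<rho>1" by (simp add: sat_enc_subst)
        let ?r = "asg_comp \<rho>1 \<omega>"
        have "preceq_f Oenc z f ?r \<rho>"
          using p1 a2 a3 enc unfolding preceq_f_def is_preorder_encoding_def by fastforce
        moreover have "sat_set ?r ?E"
        proof (cases v)
          case None then show ?thesis by (simp add: obj_le_ext_def eint_dec_def sat_set_def)
        next
          case (Some k)
          then have "sat \<rho>1 (obj_le f (k-1))" using s1 by (simp add: obj_le_ext_def eint_dec_def sat_set_def)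
          then show ?thesis using a2 Some by (simp add: obj_le_ext_def eint_dec_def sat_set_def sat_obj_le)
        qed
        ultimately show ?thesis using a1 by (auto simp: sat_set_def)
      qed
    qed
    show ?thesis using wv step unfolding weakly_valid_def by blast
  qed
  show ?thesis using W unfolding valid_def by blast
qed

end
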